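(* Let $v$ be a weight on $[0,1)$ satisfying $\lim_{r\to1^-}v(r)=0$ and let $t\in[0,1)$. Identifying the bidual $(H^0_v)''$ with $H^\infty_v$ via the canonical isometric isomorphism, the bi-transpose $C_t''\colon H^\infty_v\to H^\infty_v$ of $C_t\colon H^0_v\to H^0_v$ coincides with $C_t\colon H^\infty_v\to H^\infty_v$.
   Context: $\mathbb{D}=\{z\in\mathbb{C}:|z|<1\}$ and $H(\mathbb{D})$ is the space of holomorphic functions on $\mathbb{D}$. A weight is a continuous non-increasing function $v\colon[0,1)\to(0,\infty)$, extended to $\mathbb{D}$ by $v(z):=v(|z|)$. $H^\infty_v=\{f\in H(\mathbb{D}):\|f\|_{\infty,v}:=\sup_{z\in\mathbb{D}}|f(z)|v(z)<\infty\}$ and $H^0_v=\{f\in H(\mathbb{D}):\lim_{|z|\to1^-}|f(z)|v(z)=0\}$, both with the norm $\|\cdot\|_{\infty,v}$. When $\lim_{r\to1^-}v(r)=0$, $H^\infty_v$ is canonically isometric to $(H^0_v)''$: letting $X$ be the Banach space of linear functionals on $H^\infty_v$ whose restriction to the closed unit ball $U_v$ of $H^\infty_v$ is continuous for the topology of uniform convergence on compact subsets of $\mathbb{D}$ (normed by $\sup_{f\in U_v}|F(f)|$), the restriction map $F\mapsto F|_{H^0_v}$ is an isometric isomorphism of $X$ onto $(H^0_v)'$, and the evaluation map $f\mapsto(F\mapsto F(f))$ is an isometric isomorphism of $H^\infty_v$ onto $X'$; composing gives $H^\infty_v\cong(H^0_v)''$. For $t\in[0,1]$ the generalized Cesàro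 operator $C_t$ is defined on $f\in H(\mathbb{D})$ by $C_tf(0)=f(0)$ and $C_tf(z)=\frac{1}{z}\int_0^z\frac{f(\xi)}{1-t\xi}\,d\xi$ for $z\neq0$; for $t\in[0,1)$ it maps $H^0_v$ and $H^\infty_v$ continuously into themselves. *)

theory Defs
  imports "HOL-Complex_Analysis.Complex_Analysis"
begin

definition weight :: "(real \<Rightarrow> real) \<Rightarrow> bool" where
  "weight v \<longleftrightarrow> continuous_on {0..<1} v
     \<and> (\<forall>r s. 0 \<le> r \<and> r \<le> s \<and> s < 1 \<longrightarrow> v s \<le> v r)
     \<and> (\<forall>r. 0 \<le> r \<and> r < 1 \<longrightarrow> v r > 0)"

definition Hinf :: "(real \<Rightarrow> real) \<Rightarrow> (complex \<Rightarrow> complex) set" where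
  "Hinf v = {f. f holomorphic_on ball 0 1 \<and>
      bounded ((\<lambda>z. norm (f z) * v (norm z)) ` ball 0 1)}"

definition H0 :: "(real \<Rightarrow> real) \<Rightarrow> (complex \<Rightarrow> complex) set" where
  "H0 v = {f. f holomorphic_on ball 0 1 \<and>
      (\<forall>e>0. \<exists>r<1. \<forall>z. r < norm z \<and> norm z < 1 \<longrightarrow> norm (f z) * v (norm z) < e)}"

definition wnorm :: "(real \<Rightarrow> real) \<Rightarrow> (complex \<Rightarrow> complex) \<Rightarrow> real" where
  "wnorm v f = (SUP z\<in>ball 0 1. norm (f z) * v (norm z))"

definition Uball :: "(real \<Rightarrow> real) \<Rightarrow> (complex \<Rightarrow> complex) set" where
  "Uball v = {f \<in> Hinf v. wnorm v f \<le> 1}"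

definition clinear_on ::
  "(complex \<Rightarrow> complex) set \<Rightarrow> ((complex \<Rightarrow> complex) \<Rightarrow> complex) \<Rightarrow> bool" where
  "clinear_on S F \<longleftrightarrow>
     (\<forall>f\<in>S. \<forall>g\<in>S. F (\<lambda>z. f z + g z) = F f + F g) \<and>
     (\<forall>f\<in>S. \<forall>c. F (\<lambda>z. c * f z) = c * F f)"

definition H0_dual :: "(real \<Rightarrow> real) \<Rightarrow> ((complex \<Rightarrow> complex) \<Rightarrow> complex) set" where
  "H0_dual v = {u. clinear_on (H0 v) u \<and>
      (\<exists>C. \<forall>f\<in>H0 v. norm (u f) \<le> C * wnorm v f)}"

text \<open>Continuity on Uball v for the topology of uniform convergence on compact subsets
  of the disc (basic neighbourhoods of f: uniform closeness on a compact K in the disc).\<close>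
definition cont_on_ball_co ::
  "(real \<Rightarrow> real) \<Rightarrow> ((complex \<Rightarrow> complex) \<Rightarrow> complex) \<Rightarrow> bool" where
  "cont_on_ball_co v F \<longleftrightarrow>
     (\<forall>f\<in>Uball v. \<forall>e>0. \<exists>K \<delta>. compact K \<and> K \<subseteq> ball 0 1 \<and> \<delta> > 0 \<and>
        (\<forall>g\<in>Uball v. (\<forall>z\<in>K. norm (g z - f z) < \<delta>) \<longrightarrow> norm (F g - F f) < e))"

definition Xspace :: "(real \<Rightarrow> real) \<Rightarrow> ((complex \<Rightarrow> complex) \<Rightarrow> complex) set" where
  "Xspace v = {F. clinear_on (Hinf v) F \<and> cont_on_ball_co v F}"

definition cesaro :: "real \<Rightarrow> (complex \<Rightarrow> complex) \<Rightarrow> (complex \<Rightarrow> complex)" where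
  "cesaro t f = (\<lambda>z. if z = 0 then f 0
      else contour_integral (linepath 0 z) (\<lambda>\<xi>. f \<xi> / (1 - of_real t * \<xi>)) / z)"

end

theory Submission
  imports Defs
begin

lemma seg_norm: "(\<xi>::complex) \<in> closed_segment 0 z \<Longrightarrow> norm \<xi> \<le> norm z"
  using segment_bound1[of \<xi> 0 z] by simp

lemma seg_ball: "(z::complex) \<in> ball 0 1 \<Longrightarrow> closed_segment 0 z \<subseteq> ball 0 1"
  by (meson centre_in_ball convex_ball convex_contains_segment zero_less_one)

lemma prim:
  assumes "h holomorphic_on ball 0 1" "x \<in> ball (0::complex) 1"
  shows "((\<lambda>x. contour_integral (linepath 0 x) h) has_field_derivative h x) (at x)"
proof -
  have "((\<lambda>x. contour_integral (linepath 0 x) h) has_field_derivative h x) (at x within ball 0 1)"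
  proof (rule triangle_contour_integrals_convex_primitive[where S="ball 0 1"])
    show "continuous_on (ball 0 1) h"
      using assms(1) holomorphic_on_imp_continuous_on by blast
    fix b c assume bc: "b \<in> ball (0::complex) 1" "c \<in> ball (0::complex) 1"
    have "h holomorphic_on convex hull {0,b,c}"
      by (rule holomorphic_on_subset[OF assms(1)]) (intro hull_minimal, use bc in auto)
    then have "(h has_contour_integral 0) (linepath 0 b +++ linepath b c +++ linepath c 0)"
      by (rule Cauchy_theorem_triangle)
    then show "contour_integral (linepath 0 b) h + contour_integral (linepath b c) h +
                       contour_integral (linepath c 0) h = 0"
      by (rule has_chain_integral_chain_integral3)
  qed (use assms in auto)
  then show ?thesis using at_within_open[of x "ball 0 1"] assms(2) by simp
qed

lemma denom_nz:
  assumes "0 \<le> t" "t < 1" "norm (\<xi>::complex) < 1"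
  shows "1 - t \<le> norm (1 - of_real t * \<xi>)"
proof -
  have "norm (of_real t * \<xi>) \<le> t"
    using assms by (simp add: norm_mult mult_left_le)
  moreover have "1 - norm (of_real t * \<xi>) \<le> norm (1 - of_real t * \<xi>)"
    by (metis norm_one norm_triangle_ineq2)
  ultimately show ?thesis by linarith
qed

lemma integrand_hol:
  assumes "g holomorphic_on ball 0 1" "0 \<le> t" "t < 1"
  shows "(\<lambda>\<xi>. g \<xi> / (1 - of_real t * \<xi>)) holomorphic_on ball 0 1"
proof (intro holomorphic_intros assms(1))
  fix \<xi> :: complex assume "\<xi> \<in> ball 0 1"
  then have "1 - t \<le> norm (1 - of_real t * \<xi>)" using denom_nz assms by auto
  then show "1 - of_real t * \<xi> \<noteq> 0" using assms by auto
qed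

lemma cesaro_hol:
  assumes "g holomorphic_on ball 0 1" "0 \<le> t" "t < 1"
  shows "cesaro t g holomorphic_on ball 0 1"
proof -
  define h where "h = (\<lambda>\<xi>. g \<xi> / (1 - of_real t * \<xi>))"
  define H where "H = (\<lambda>x. contour_integral (linepath 0 x) h)"
  have hh: "h holomorphic_on ball 0 1" unfolding h_def by (rule integrand_hol[OF assms])
  have dH: "(H has_field_derivative h x) (at x)" if "x \<in> ball 0 1" for x
    unfolding H_def by (rule prim[OF hh that])
  have "(\<lambda>z. H z / z) holomorphic_on (ball 0 1 - {0})"
  proof -
    have "H holomorphic_on ball 0 1"
      using dH by (meson holomorphic_on_def field_differentiable_at_within field_differentiable_def)
    then show ?thesis by (intro holomorphic_intros) (auto intro: holomorphic_on_subset)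
  qed
  moreover have "\<forall>z\<in>ball 0 1 - {0}. H z / z = cesaro t g z"
    by (auto simp: cesaro_def H_def h_def)
  ultimately have hol: "cesaro t g holomorphic_on (ball 0 1 - {0})"
    using holomorphic_transform by blast
  have "((\<lambda>y. (H y - H 0) / (y - 0)) \<longlongrightarrow> h 0) (at 0)"
    using dH[of 0] by (simp add: DERIV_def)
  then have "((\<lambda>y. H y / y) \<longlongrightarrow> g 0) (at 0)"
    by (simp add: H_def h_def)
  then have "(cesaro t g \<longlongrightarrow> g 0) (at 0)"
    by (rule Lim_transform_eventually)
       (auto simp: eventually_at_filter cesaro_def H_def h_def)
  then have "(cesaro t g \<longlongrightarrow> cesaro t g 0) (at 0 within ball 0 1)"
    using tendsto_within_subset by (fastforce simp: cesaro_def)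
  then show ?thesis
    by (intro no_isolated_singularity'[OF _ hol]) auto
qed

lemma ces_bound:
  assumes "k holomorphic_on ball 0 1" "z \<in> ball 0 1" "0 \<le> t" "t < 1" "0 \<le> B"
    "\<And>\<xi>. \<xi> \<in> closed_segment 0 z \<Longrightarrow> norm (k \<xi>) \<le> B"
  shows "norm (cesaro t k z) \<le> B / (1 - t)"
proof (cases "z = 0")
  case True
  then have "norm (k 0) \<le> B" using assms(6)[of 0] by simp
  moreover have "B * (1 - t) \<le> B" using assms by (simp add: mult_left_le)
  then have "B \<le> B / (1 - t)" using assms by (simp add: divide_simps)
  ultimately show ?thesis using True by (simp add: cesaro_def)
next
  case False
  define h where "h = (\<lambda>\<xi>. k \<xi> / (1 - of_real t * \<xi>))"
  have hh: "h holomorphic_on ball 0 1" unfolding h_def by (rule integrand_hol[OF assms(1,3,4)])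
  have "continuous_on (closed_segment 0 z) h"
    using holomorphic_on_imp_continuous_on[OF hh] seg_ball[OF assms(2)]
    by (rule continuous_on_subset)
  then have "(h has_contour_integral (contour_integral (linepath 0 z) h)) (linepath 0 z)"
    by (intro has_contour_integral_integral contour_integrable_continuous_linepath)
  moreover have "norm (h \<xi>) \<le> B / (1 - t)" if "\<xi> \<in> closed_segment 0 z" for \<xi>
  proof -
    have "norm \<xi> < 1" using seg_ball[OF assms(2)] that by auto
    then have d: "1 - t \<le> norm (1 - of_real t * \<xi>)" using denom_nz assms by auto
    have "norm (h \<xi>) = norm (k \<xi>) / norm (1 - of_real t * \<xi>)"
      by (simp add: h_def norm_divide)
    also have "\<dots> \<le> B / (1 - t)"
      using d assms(4,5) assms(6)[OF that] by (intro frac_le) auto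
    finally show ?thesis .
  qed
  ultimately have "norm (contour_integral (linepath 0 z) h) \<le> B / (1 - t) * norm (z - 0)"
    using assms by (intro has_contour_integral_bound_linepath) auto
  then show ?thesis using False assms(4)
    by (simp add: cesaro_def h_def norm_divide divide_simps)
qed

lemma ces_diff:
  assumes "g holomorphic_on ball 0 1" "k holomorphic_on ball 0 1" "z \<in> ball 0 1" "0 \<le> t" "t < 1"
  shows "cesaro t g z - cesaro t k z = cesaro t (\<lambda>\<xi>. g \<xi> - k \<xi>) z"
proof (cases "z = 0")
  case True then show ?thesis by (simp add: cesaro_def)
next
  case False
  have int: "(\<lambda>\<xi>. q \<xi> / (1 - of_real t * \<xi>)) contour_integrable_on linepath 0 z"
    if "q holomorphic_on ball 0 1" for q
  proof -
    have "continuous_on (closed_segment 0 z) (\<lambda>\<xi>. q \<xi> / (1 - of_real t * \<xi>))"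
      using holomorphic_on_imp_continuous_on[OF integrand_hol[OF that assms(4,5)]] seg_ball[OF assms(3)]
      by (rule continuous_on_subset)
    then show ?thesis by (rule contour_integrable_continuous_linepath)
  qed
  have "(\<lambda>\<xi>. (g \<xi> - k \<xi>) / (1 - of_real t * \<xi>)) = (\<lambda>\<xi>. g \<xi> / (1 - of_real t * \<xi>) - k \<xi> / (1 - of_real t * \<xi>))"
    by (simp add: diff_divide_distrib)
  then show ?thesis using False contour_integral_diff[OF int[OF assms(1)] int[OF assms(2)]]
    by (simp add: cesaro_def diff_divide_distrib)
qed

lemma weightD:
  assumes "weight v"
  shows "\<And>r. 0 \<le> r \<Longrightarrow> r < 1 \<Longrightarrow> v r > 0"
    and "\<And>r s. 0 \<le> r \<Longrightarrow> r \<le> s \<Longrightarrow> s < 1 \<Longrightarrow> v s \<le> v r"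
  using assms unfolding weight_def by auto

lemma wn_upper: "f \<in> Hinf v \<Longrightarrow> z \<in> ball 0 1 \<Longrightarrow> norm (f z) * v (norm z) \<le> wnorm v f"
  unfolding wnorm_def Hinf_def by (auto intro!: cSUP_upper bounded_imp_bdd_above)

lemma wn_least: "(\<And>z. z \<in> ball 0 1 \<Longrightarrow> norm (f z) * v (norm z) \<le> M) \<Longrightarrow> wnorm v f \<le> M"
  unfolding wnorm_def by (rule cSUP_least) auto

lemma Hinf_intro:
  assumes "weight v" "f holomorphic_on ball 0 1"
    "\<And>z. z \<in> ball 0 1 \<Longrightarrow> norm (f z) * v (norm z) \<le> M"
  shows "f \<in> Hinf v"
proof -
  have "bounded ((\<lambda>z. norm (f z) * v (norm z)) ` ball 0 1)"
    unfolding bounded_iff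
  proof (intro exI ballI)
    fix y assume "y \<in> (\<lambda>z. norm (f z) * v (norm z)) ` ball 0 1"
    then obtain z where z: "z \<in> ball 0 1" "y = norm (f z) * v (norm z)" by auto
    have "v (norm z) > 0" using weightD(1)[OF assms(1)] z by auto
    then show "norm y \<le> M" using z assms(3)[OF z(1)] by simp
  qed
  then show ?thesis using assms(2) by (simp add: Hinf_def)
qed

lemma Uball_intro:
  assumes "weight v" "f holomorphic_on ball 0 1"
    "\<And>z. z \<in> ball 0 1 \<Longrightarrow> norm (f z) * v (norm z) \<le> M" "M \<le> 1"
  shows "f \<in> Uball v"
  unfolding Uball_def using Hinf_intro[OF assms(1-3)] wn_least[of f v M] assms(3,4) by force

lemma H0_intro:
  assumes "weight v" "(v \<longlongrightarrow> 0) (at_left 1)" "f holomorphic_on ball 0 1"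
    "\<And>z. z \<in> ball 0 1 \<Longrightarrow> norm (f z) \<le> B"
  shows "f \<in> H0 v"
proof -
  have "\<exists>r<1. \<forall>z. r < norm z \<and> norm z < 1 \<longrightarrow> norm (f z) * v (norm z) < e" if e: "e > 0" for e
  proof -
    define B' where "B' = max B 0"
    have B'0: "B' \<ge> 0" by (simp add: B'_def)
    have "e / (B' + 1) > 0" using e B'0 by simp
    then have "eventually (\<lambda>x. v x < e / (B' + 1)) (at_left 1)"
      using order_tendstoD(2)[OF assms(2)] by blast
    then obtain b where b: "b < 1" "\<forall>y>b. y < 1 \<longrightarrow> v y < e / (B' + 1)"
      using eventually_at_left[of 0 "1::real"] by auto
    show ?thesis
    proof (intro exI conjI allI impI)
      fix z :: complex assume z: "b < norm z \<and> norm z < 1"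
      have vp: "v (norm z) > 0" using weightD(1)[OF assms(1)] z by auto
      have vl: "v (norm z) < e / (B' + 1)" using b z by auto
      have "norm (f z) \<le> B'" using assms(4)[of z] z by (simp add: B'_def)
      then have "norm (f z) * v (norm z) \<le> B' * v (norm z)" using vp by (simp add: mult_right_mono)
      also have "\<dots> \<le> B' * (e / (B' + 1))" using vl B'0 by (intro mult_left_mono) auto
      also have "\<dots> < e" using e B'0 by (simp add: divide_simps)
      finally show "norm (f z) * v (norm z) < e" .
    qed (use b in auto)
  qed
  then show ?thesis using assms(3) by (simp add: H0_def)
qed

lemma ces_wbound:
  assumes "weight v" "0 \<le> t" "t < 1" "g holomorphic_on ball 0 1"
    "\<And>z. z \<in> ball 0 1 \<Longrightarrow> norm (g z) * v (norm z) \<le> M" "z \<in> ball 0 1"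
  shows "norm (cesaro t g z) * v (norm z) \<le> M / (1 - t)"
proof -
  have vz: "v (norm z) > 0" using weightD(1)[OF assms(1)] assms(6) by auto
  have M0: "0 \<le> M" using assms(5)[OF assms(6)] vz by (meson mult_nonneg_nonneg norm_ge_zero order.trans less_imp_le)
  have "norm (g \<xi>) \<le> M / v (norm z)" if "\<xi> \<in> closed_segment 0 z" for \<xi>
  proof -
    have n: "norm \<xi> \<le> norm z" using seg_norm[OF that] .
    have xb: "\<xi> \<in> ball 0 1" using seg_ball[OF assms(6)] that by auto
    have vx: "v (norm z) \<le> v (norm \<xi>)" using weightD(2)[OF assms(1)] n assms(6) by auto
    have "norm (g \<xi>) * v (norm z) \<le> norm (g \<xi>) * v (norm \<xi>)" using vx by (simp add: mult_left_mono)
    also have "\<dots> \<le> M" using assms(5)[OF xb] .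
    finally show ?thesis using vz by (simp add: divide_simps)
  qed
  then have "norm (cesaro t g z) \<le> M / v (norm z) / (1 - t)"
    using M0 vz assms by (intro ces_bound) auto
  then show ?thesis using vz assms(3) by (simp add: divide_simps ac_simps)
qed

lemma compact_rad:
  assumes "compact K" "K \<subseteq> ball (0::complex) 1"
  shows "\<exists>\<rho>. 0 \<le> \<rho> \<and> \<rho> < 1 \<and> (\<forall>z\<in>K. norm z \<le> \<rho>)"
proof (cases "K = {}")
  case True then show ?thesis by (intro exI[of _ 0]) auto
next
  case False
  have "compact (norm ` K)" by (intro compact_continuous_image continuous_intros assms(1))
  then obtain s where "s \<in> norm ` K" "\<forall>y\<in>norm ` K. y \<le> s"
    using compact_attains_sup[of "norm ` K"] False by blast
  then show ?thesis using assms(2) by (intro exI[of _ s]) force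
qed

lemma approx:
  assumes "f holomorphic_on ball 0 1" "0 \<le> \<rho>" "\<rho> < 1" "\<delta> > 0"
  shows "\<exists>r. 0 \<le> r \<and> r < 1 \<and> (\<forall>\<xi>. norm \<xi> \<le> \<rho> \<longrightarrow> norm (f (of_real r * \<xi>) - f \<xi>) < \<delta>)"
proof -
  have "continuous_on (cball 0 \<rho>) f"
    using holomorphic_on_imp_continuous_on[OF assms(1)] by (rule continuous_on_subset) (use assms in auto)
  then have "uniformly_continuous_on (cball 0 \<rho>) f" by (intro compact_uniformly_continuous) auto
  then obtain d where d: "d > 0" "\<forall>x\<in>cball 0 \<rho>. \<forall>x'\<in>cball 0 \<rho>. dist x' x < d \<longrightarrow> dist (f x') (f x) < \<delta>"
    unfolding uniformly_continuous_on_def using assms(4) by metis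
  define r where "r = max 0 (1 - d/2)"
  have r: "0 \<le> r" "r < 1" "1 - r \<le> d/2" "r \<le> 1" using d unfolding r_def max_def by auto
  show ?thesis
  proof (intro exI conjI allI impI)
    fix \<xi> :: complex assume x: "norm \<xi> \<le> \<rho>"
    have e: "of_real r * \<xi> - \<xi> = of_real (r - 1) * \<xi>" by (simp add: algebra_simps)
    have "norm (of_real r * \<xi> - \<xi>) = (1 - r) * norm \<xi>" using r unfolding e norm_mult norm_of_real by simp
    also have "\<dots> \<le> (1 - r) * 1" using x assms r by (intro mult_left_mono) auto
    also have "\<dots> < d" using r d by simp
    finally have dd: "dist (of_real r * \<xi>) \<xi> < d" by (simp add: dist_norm)
    have "r * norm \<xi> \<le> norm \<xi>" using r by (intro mult_left_le_one_le) auto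
    then have "norm (of_real r * \<xi>) \<le> \<rho>" using r x by (simp add: norm_mult)
    then show "norm (f (of_real r * \<xi>) - f \<xi>) < \<delta>" using d(2) dd x by (auto simp: dist_norm)
  qed (use r in auto)
qed

theorem lemma2p6:
  fixes v :: "real \<Rightarrow> real" and t :: real
  assumes "weight v"
    and "(v \<longlongrightarrow> 0) (at_left 1)"
    and "0 \<le> t" and "t < 1"
  shows "\<forall>f\<in>Hinf v. \<forall>u\<in>H0_dual v. \<forall>F\<in>Xspace v. \<forall>G\<in>Xspace v.
           (\<forall>g\<in>H0 v. F g = u g) \<longrightarrow> (\<forall>g\<in>H0 v. G g = u (cesaro t g)) \<longrightarrow>
           F (cesaro t f) = G f"
proof (intro ballI impI)
  fix f u F G
  assume f: "f \<in> Hinf v" and uD: "u \<in> H0_dual v" and FX: "F \<in> Xspace v" and GX: "G \<in> Xspace v"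
    and hF: "\<forall>g\<in>H0 v. F g = u g" and hG: "\<forall>g\<in>H0 v. G g = u (cesaro t g)"
  note wt = assms(1)
  have fh: "f holomorphic_on ball 0 1" using f by (simp add: Hinf_def)
  define M where "M = wnorm v f"
  have fM: "\<And>z. z \<in> ball 0 1 \<Longrightarrow> norm (f z) * v (norm z) \<le> M"
    unfolding M_def using wn_upper[OF f] .
  have "v (norm (0::complex)) > 0" using weightD(1)[OF wt] by simp
  then have "0 \<le> norm (f 0) * v (norm (0::complex))" by simp
  then have M0: "0 \<le> M" using fM[of 0] by simp
  define c where "c = (1 - t) / (M + 1)"
  have c0: "c > 0" using assms M0 by (simp add: c_def)
  have "(1 - t) * M \<le> 1 * M" using assms M0 by (intro mult_right_mono) auto
  then have cM: "c * M \<le> 1" using assms M0 by (simp add: c_def divide_simps)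
  have cM2: "c * (M / (1 - t)) \<le> 1" using assms M0 by (simp add: c_def divide_simps)
  have linF: "clinear_on (Hinf v) F" and contF: "cont_on_ball_co v F"
    using FX by (auto simp: Xspace_def)
  have linG: "clinear_on (Hinf v) G" and contG: "cont_on_ball_co v G"
    using GX by (auto simp: Xspace_def)
  have sF: "F (\<lambda>z. a * g z) = a * F g" if "g \<in> Hinf v" for a g
    using linF that by (simp add: clinear_on_def)
  have sG: "G (\<lambda>z. a * g z) = a * G g" if "g \<in> Hinf v" for a g
    using linG that by (simp add: clinear_on_def)
  have gen: "g \<in> Hinf v \<and> cesaro t g \<in> Hinf v \<and> (\<lambda>z. c * g z) \<in> Uball v
      \<and> (\<lambda>z. c * cesaro t g z) \<in> Uball v"
    if gh: "g holomorphic_on ball 0 1" and gM: "\<And>z. z \<in> ball 0 1 \<Longrightarrow> norm (g z) * v (norm z) \<le> M" for g :: "complex \<Rightarrow> complex"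
  proof (intro conjI)
    have ch: "cesaro t g holomorphic_on ball 0 1" using cesaro_hol[OF gh assms(3,4)] .
    have cb: "\<And>z. z \<in> ball 0 1 \<Longrightarrow> norm (cesaro t g z) * v (norm z) \<le> M / (1 - t)"
      using ces_wbound[OF wt assms(3,4) gh gM] .
    show "g \<in> Hinf v" by (rule Hinf_intro[OF wt gh gM])
    show "cesaro t g \<in> Hinf v" by (rule Hinf_intro[OF wt ch cb])
    show "(\<lambda>z. c * g z) \<in> Uball v"
    proof (rule Uball_intro[OF wt _ _ cM])
      show "(\<lambda>z. c * g z) holomorphic_on ball 0 1" by (intro holomorphic_intros gh)
      fix z :: complex assume "z \<in> ball 0 1"
      then show "norm (c * g z) * v (norm z) \<le> c * M"
        using gM[of z] c0 by (simp add: norm_mult mult.assoc)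
    qed
    show "(\<lambda>z. c * cesaro t g z) \<in> Uball v"
    proof (rule Uball_intro[OF wt _ _ cM2])
      show "(\<lambda>z. c * cesaro t g z) holomorphic_on ball 0 1" by (intro holomorphic_intros ch)
      fix z :: complex assume z: "z \<in> ball 0 1"
      have "c * (norm (cesaro t g z) * v (norm z)) \<le> c * (M / (1 - t))"
        using cb[OF z] c0 by (intro mult_left_mono) auto
      then show "norm (c * cesaro t g z) * v (norm z) \<le> c * (M / (1 - t))"
        using c0 by (simp add: norm_mult mult.assoc)
    qed
  qed
  note gf = gen[OF fh fM]
  show "F (cesaro t f) = G f"
  proof (rule ccontr)
    assume ne: "F (cesaro t f) \<noteq> G f"
    define \<epsilon> where "\<epsilon> = norm (F (cesaro t f) - G f)"
    have \<epsilon>0: "\<epsilon> > 0" using ne by (simp add: \<epsilon>_def)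
    have ec: "\<epsilon> * c / 2 > 0" using \<epsilon>0 c0 by simp
    obtain K1 \<delta>1 where K1: "compact K1" "K1 \<subseteq> ball 0 1" "\<delta>1 > 0"
      "\<forall>g\<in>Uball v. (\<forall>z\<in>K1. norm (g z - c * cesaro t f z) < \<delta>1) \<longrightarrow>
         norm (F g - F (\<lambda>z. c * cesaro t f z)) < \<epsilon> * c / 2"
      using mp[OF spec[OF bspec[OF contF[unfolded cont_on_ball_co_def], of "\<lambda>z. c * cesaro t f z"], of "\<epsilon> * c / 2"]] gf ec
      by blast
    obtain K2 \<delta>2 where K2: "compact K2" "K2 \<subseteq> ball 0 1" "\<delta>2 > 0"
      "\<forall>g\<in>Uball v. (\<forall>z\<in>K2. norm (g z - c * f z) < \<delta>2) \<longrightarrow>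
         norm (G g - G (\<lambda>z. c * f z)) < \<epsilon> * c / 2"
      using mp[OF spec[OF bspec[OF contG[unfolded cont_on_ball_co_def], of "\<lambda>z. c * f z"], of "\<epsilon> * c / 2"]] gf ec
      by blast
    obtain \<rho>1 where \<rho>1: "0 \<le> \<rho>1" "\<rho>1 < 1" "\<forall>z\<in>K1. norm z \<le> \<rho>1" using compact_rad[OF K1(1,2)] by blast
    obtain \<rho>2 where \<rho>2: "0 \<le> \<rho>2" "\<rho>2 < 1" "\<forall>z\<in>K2. norm z \<le> \<rho>2" using compact_rad[OF K2(1,2)] by blast
    define \<rho> where "\<rho> = max \<rho>1 \<rho>2"
    have \<rho>: "0 \<le> \<rho>" "\<rho> < 1" using \<rho>1 \<rho>2 by (auto simp: \<rho>_def)
    define \<delta>0 where "\<delta>0 = min (\<delta>2 / c) (\<delta>1 * (1 - t) / c) / 2"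
    have d0: "\<delta>0 > 0" using K1 K2 c0 assms by (simp add: \<delta>0_def)
    have m1: "\<delta>0 \<le> \<delta>2 / c / 2" and m2: "\<delta>0 \<le> \<delta>1 * (1 - t) / c / 2"
      by (simp_all add: \<delta>0_def)
    have "c * \<delta>0 \<le> c * (\<delta>2 / c / 2)" using m1 c0 by (intro mult_left_mono) auto
    then have d0a: "c * \<delta>0 < \<delta>2" using c0 K2 by simp
    have "\<delta>0 / (1 - t) \<le> \<delta>1 * (1 - t) / c / 2 / (1 - t)" using m2 assms by (intro divide_right_mono) auto
    then have "c * (\<delta>0 / (1 - t)) \<le> c * (\<delta>1 * (1 - t) / c / 2 / (1 - t))" using c0 by (intro mult_left_mono) auto
    moreover have "c * (\<delta>1 * (1 - t) / c / 2 / (1 - t)) = \<delta>1 / 2" using c0 assms by (simp add: field_simps)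
    ultimately have d0b: "c * (\<delta>0 / (1 - t)) < \<delta>1" using K1 by linarith
    obtain r where r: "0 \<le> r" "r < 1" "\<forall>\<xi>. norm \<xi> \<le> \<rho> \<longrightarrow> norm (f (of_real r * \<xi>) - f \<xi>) < \<delta>0"
      using approx[OF fh \<rho> d0] by blast
    define fr where "fr = (\<lambda>z. f (of_real r * z))"
    have rz: "norm (of_real r * z) \<le> norm z" for z :: complex
      using r by (simp add: norm_mult mult_left_le_one_le)
    have frh: "fr holomorphic_on ball 0 1"
    proof -
      have "(f \<circ> (\<lambda>z. of_real r * z)) holomorphic_on ball 0 1"
        by (rule holomorphic_on_compose_gen[OF _ fh]) (auto intro!: holomorphic_intros le_less_trans[OF rz])
      then show ?thesis by (simp add: fr_def o_def)
    qed
    have frM: "norm (fr z) * v (norm z) \<le> M" if z: "z \<in> ball 0 1" for z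
    proof -
      have zb: "of_real r * z \<in> ball 0 1" using rz[of z] z by auto
      have "v (norm z) \<le> v (norm (of_real r * z))" using weightD(2)[OF wt] rz[of z] z by auto
      then have "norm (fr z) * v (norm z) \<le> norm (f (of_real r * z)) * v (norm (of_real r * z))"
        by (simp add: fr_def mult_left_mono)
      also have "\<dots> \<le> M" using fM[OF zb] .
      finally show ?thesis .
    qed
    have gr: "fr \<in> Hinf v \<and> cesaro t fr \<in> Hinf v \<and> (\<lambda>z. c * fr z) \<in> Uball v
      \<and> (\<lambda>z. c * cesaro t fr z) \<in> Uball v"
      by (rule gen[OF frh frM]) simp
    have "compact (f ` cball 0 r)"
      by (intro compact_continuous_image continuous_on_subset[OF holomorphic_on_imp_continuous_on[OF fh]])
         (use r in auto)
    then obtain B where B: "\<forall>y\<in>f ` cball 0 r. norm y \<le> B"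
      using compact_imp_bounded bounded_iff by metis
    have "f 0 \<in> f ` cball 0 r" using r by auto
    then have "norm (f 0) \<le> B" using B by blast
    then have B0: "0 \<le> B" by (rule order_trans[OF norm_ge_zero])
    have frB: "norm (fr z) \<le> B" if "z \<in> ball 0 1" for z
    proof -
      have "norm (of_real r * z) \<le> r" using that r by (simp add: norm_mult mult_left_le)
      then show ?thesis using B by (auto simp: fr_def)
    qed
    have frH0: "fr \<in> H0 v" by (rule H0_intro[OF wt assms(2) frh frB])
    have cfrH0: "cesaro t fr \<in> H0 v"
    proof (rule H0_intro[OF wt assms(2) cesaro_hol[OF frh assms(3,4)]])
      fix z :: complex assume z: "z \<in> ball 0 1"
      show "norm (cesaro t fr z) \<le> B / (1 - t)"
        by (rule ces_bound[OF frh z assms(3,4) B0]) (use frB seg_ball[OF z] in auto)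
    qed
    have key: "F (\<lambda>z. c * cesaro t fr z) = G (\<lambda>z. c * fr z)"
      using sF[of "cesaro t fr" c] sG[of fr c] gr hF cfrH0 hG frH0 by simp
    have a: "\<forall>z\<in>K2. norm (c * fr z - c * f z) < \<delta>2"
    proof
      fix z assume z: "z \<in> K2"
      have "norm z \<le> \<rho>" using \<rho>2 z by (auto simp: \<rho>_def)
      then have "norm (fr z - f z) < \<delta>0" using r by (simp add: fr_def)
      then have "norm (c * fr z - c * f z) < c * \<delta>0"
        using c0 by (simp add: norm_mult flip: right_diff_distrib)
      then show "norm (c * fr z - c * f z) < \<delta>2" using d0a by simp
    qed
    have b: "\<forall>z\<in>K1. norm (c * cesaro t fr z - c * cesaro t f z) < \<delta>1"
    proof
      fix z assume z: "z \<in> K1"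
      have zb: "z \<in> ball 0 1" using z K1 by auto
      have nz: "norm z \<le> \<rho>" using \<rho>1 z by (auto simp: \<rho>_def)
      have "norm (cesaro t (\<lambda>\<xi>. fr \<xi> - f \<xi>) z) \<le> \<delta>0 / (1 - t)"
      proof (rule ces_bound[OF _ zb assms(3,4)])
        show "(\<lambda>\<xi>. fr \<xi> - f \<xi>) holomorphic_on ball 0 1" by (intro holomorphic_intros frh fh)
        show "0 \<le> \<delta>0" using d0 by simp
        fix \<xi> assume "\<xi> \<in> closed_segment 0 z"
        then have "norm \<xi> \<le> \<rho>" using seg_norm nz by force
        then show "norm (fr \<xi> - f \<xi>) \<le> \<delta>0" using r by (simp add: fr_def less_imp_le)
      qed
      then have "norm (cesaro t fr z - cesaro t f z) \<le> \<delta>0 / (1 - t)"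
        using ces_diff[OF frh fh zb assms(3,4)] by simp
      then have "c * norm (cesaro t fr z - cesaro t f z) \<le> c * (\<delta>0 / (1 - t))"
        using c0 by (intro mult_left_mono) auto
      then have "norm (c * cesaro t fr z - c * cesaro t f z) \<le> c * (\<delta>0 / (1 - t))"
        using c0 by (simp add: norm_mult flip: right_diff_distrib)
      then show "norm (c * cesaro t fr z - c * cesaro t f z) < \<delta>1" using d0b by simp
    qed
    have i1: "norm (F (\<lambda>z. c * cesaro t fr z) - F (\<lambda>z. c * cesaro t f z)) < \<epsilon> * c / 2"
      by (rule K1(4)[rule_format]) (use gr b in auto)
    have i2: "norm (G (\<lambda>z. c * fr z) - G (\<lambda>z. c * f z)) < \<epsilon> * c / 2"
      by (rule K2(4)[rule_format]) (use gr a in auto)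
    have "c * \<epsilon> = norm (F (\<lambda>z. c * cesaro t f z) - G (\<lambda>z. c * f z))"
      using sF[of "cesaro t f" c] sG[of f c] gf c0
      by (simp add: \<epsilon>_def norm_mult flip: right_diff_distrib)
    also have "\<dots> \<le> norm (F (\<lambda>z. c * cesaro t fr z) - F (\<lambda>z. c * cesaro t f z))
        + norm (G (\<lambda>z. c * fr z) - G (\<lambda>z. c * f z))"
    proof -
      let ?A = "F (\<lambda>z. c * cesaro t f z)" and ?A' = "F (\<lambda>z. c * cesaro t fr z)"
      let ?D = "G (\<lambda>z. c * f z)" and ?D' = "G (\<lambda>z. c * fr z)"
      have "?A - ?D = - (?A' - ?A) + (?D' - ?D)" using key by (simp add: algebra_simps)
      then have "norm (?A - ?D) \<le> norm (- (?A' - ?A)) + norm (?D' - ?D)"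
        by (metis norm_triangle_ineq)
      then show ?thesis by (simp add: norm_minus_commute)
    qed
    also have "\<dots> < c * \<epsilon>" using i1 i2 mult.commute[of c \<epsilon>] by linarith
    finally show False by simp
  qed
qed

end
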